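(* Let $\mathcal{A}$, the generators $h_{\boldsymbol{j}}$, the graph $G_M$, the charges $Q_M^{(k)}$ and $H_M$ be as in the context, and assume the extra relation $A_{2m-1}C_{2m+2}=C_{2m}A_{2m+3}$ holds for all integers $m$ with $2\le m\le \lfloor M/2\rfloor-2$. Then $[H_M,Q_M^{(k)}]=0$ for every integer $k\ge 0$.
   Context: Extended FFD setting. Fix an integer $M\ge 1$ and complex numbers $b_1,\dots,b_M$ and $\bar b_{2m+1}$ for $0\le m\le\lfloor M/2\rfloor$. Let $\mathcal{A}$ be a unital associative complex algebra containing elements $h_1,\dots,h_M$ and $\bar h_{1},\bar h_3,\dots,\bar h_{2\lfloor M/2\rfloor+1}$ (the "generators"; write $h_{\overline{2m+1}}:=\bar h_{2m+1}$), with $h_j^2=b_j^2\,\mathbb{1}$ and $\bar h_{2m+1}^2=\bar b_{2m+1}^2\,\mathbb{1}$. Define the frustration graph $G_M=(V_M,E_M)$ whose vertices are the generators and whose edges are: $h_i\sim h_j$ iff $|i-j|\in\{1,2\}$; $\bar h_{2m-1}\sim h_j$ iff $j\in\{2m-7,2m-5,2m-3,2m-1,2m-2,2m\}$; $\bar h_{2m-1}\sim\bar h_{2m'-1}$ iff $|m-m'|=1$. Assume adjacent generators anticommute and distinct non-adjacent generators commute. Any symbol $h_j$ or $\bar h_j$ whose index lies outside the ranges above denotes $0$. Define $A_{2m-1}:=h_{2m}h_{2m-3}+h_{2m-2}\bar h_{2m+1}$ and $C_{2m}:=h_{2m-3}\bar h_{2m+3}$. An independent set is a set of vertices of $G_M$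 no two of which are adjacent; for an independent set $S$, $h_S:=\prod_{v\in S}h_v$ (the factors commute, so the order is irrelevant), $h_\emptyset=\mathbb{1}$. The charges are $Q_M^{(k)}:=\sum_{S\text{ independent},\,|S|=k}h_S$ ($Q_M^{(0)}=\mathbb{1}$), and $H_M:=Q_M^{(1)}=\sum_{j=1}^M h_j+\sum_{m=0}^{\lfloor M/2\rfloor}\bar h_{2m+1}$. *)

theory Defs
  imports Complex_Main
begin

text \<open>Generators: GH j is h_j, GB j is the barred generator \<open>bar h_j\<close> (j odd).\<close>
datatype gen = GH int | GB int

definition verts :: "int \<Rightarrow> gen set" where
  "verts M = {GH j | j. 1 \<le> j \<and> j \<le> M} \<union> {GB (2*m+1) | m. 0 \<le> m \<and> m \<le> M div 2}"

fun adj0 :: "gen \<Rightarrow> gen \<Rightarrow> bool" where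
  "adj0 (GH i) (GH j) = (\<bar>i - j\<bar> \<in> {1, 2})"
| "adj0 (GB a) (GH j) = (\<exists>m. a = 2*m - 1 \<and> j \<in> {2*m-7, 2*m-5, 2*m-3, 2*m-1, 2*m-2, 2*m})"
| "adj0 (GB a) (GB b) = (\<exists>m m'. a = 2*m - 1 \<and> b = 2*m' - 1 \<and> \<bar>m - m'\<bar> = 1)"
| "adj0 (GH j) (GB a) = False"

definition adj :: "gen \<Rightarrow> gen \<Rightarrow> bool" where
  "adj u v = (adj0 u v \<or> adj0 v u)"

definition indep :: "int \<Rightarrow> gen set \<Rightarrow> bool" where
  "indep M S = (S \<subseteq> verts M \<and> (\<forall>u\<in>S. \<forall>v\<in>S. \<not> adj u v))"

text \<open>Product of the (pairwise commuting) factors h_v, v in S, taken in some enumeration order.\<close>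
definition hprod :: "(gen \<Rightarrow> 'a::ring_1) \<Rightarrow> gen set \<Rightarrow> 'a" where
  "hprod h S = foldr (*) (map h (SOME xs. distinct xs \<and> set xs = S)) 1"

definition charge :: "int \<Rightarrow> (gen \<Rightarrow> 'a::ring_1) \<Rightarrow> nat \<Rightarrow> 'a" where
  "charge M h k = (\<Sum>S\<in>{S. indep M S \<and> card S = k}. hprod h S)"

text \<open>Generators with out-of-range indices denote 0.\<close>
definition hh :: "int \<Rightarrow> (gen \<Rightarrow> 'a::ring_1) \<Rightarrow> int \<Rightarrow> 'a" where
  "hh M h j = (if GH j \<in> verts M then h (GH j) else 0)"

definition hb :: "int \<Rightarrow> (gen \<Rightarrow> 'a::ring_1) \<Rightarrow> int \<Rightarrow> 'a" where
  "hb M h j = (if GB j \<in> verts M then h (GB j) else 0)"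

text \<open>A_{2m-1} and C_{2m}, parametrised by m.\<close>
definition Aop :: "int \<Rightarrow> (gen \<Rightarrow> 'a::ring_1) \<Rightarrow> int \<Rightarrow> 'a" where
  "Aop M h m = hh M h (2*m) * hh M h (2*m-3) + hh M h (2*m-2) * hb M h (2*m+1)"

definition Cop :: "int \<Rightarrow> (gen \<Rightarrow> 'a::ring_1) \<Rightarrow> int \<Rightarrow> 'a" where
  "Cop M h m = hh M h (2*m-3) * hb M h (2*m+3)"

end

theory Submission
  imports Defs
begin

lemma adj_HH[simp]: "adj (GH i) (GH j) \<longleftrightarrow> \<bar>i - j\<bar> = 1 \<or> \<bar>i - j\<bar> = 2"
  by (auto simp: adj_def abs_minus_commute)

lemma adj0_BH: "adj0 (GB a) (GH j) \<longleftrightarrow> odd a \<and> (j = a-6 \<or> j = a-4 \<or> j = a-2 \<or> j = a \<or> j = a-1 \<or> j = a+1)"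
  by simp presburger

lemma adj_BH[simp]: "adj (GB a) (GH j) \<longleftrightarrow> odd a \<and> (j = a-6 \<or> j = a-4 \<or> j = a-2 \<or> j = a \<or> j = a-1 \<or> j = a+1)"
  unfolding adj_def adj0_BH by simp
lemma adj_HB[simp]: "adj (GH j) (GB a) \<longleftrightarrow> odd a \<and> (j = a-6 \<or> j = a-4 \<or> j = a-2 \<or> j = a \<or> j = a-1 \<or> j = a+1)"
  unfolding adj_def adj0_BH by simp

lemma adj0_BB: "adj0 (GB a) (GB c) \<longleftrightarrow> odd a \<and> (c = a - 2 \<or> c = a + 2)"
  by simp presburger

lemma adj_BB[simp]: "adj (GB a) (GB c) \<longleftrightarrow> odd a \<and> (c = a - 2 \<or> c = a + 2)"
  unfolding adj_def adj0_BB by auto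

lemma adj_sym: "adj u v = adj v u" by (auto simp: adj_def)
lemma adj_irrefl[simp]: "\<not> adj v v" by (cases v) auto

lemma verts_H[simp]: "GH j \<in> verts M \<longleftrightarrow> 1 \<le> j \<and> j \<le> M" by (auto simp: verts_def)
lemma verts_B[simp]: "GB a \<in> verts M \<longleftrightarrow> odd a \<and> 1 \<le> a \<and> a \<le> 2 * (M div 2) + 1"
proof
  assume "GB a \<in> verts M" then show "odd a \<and> 1 \<le> a \<and> a \<le> 2 * (M div 2) + 1" by (auto simp: verts_def)
next
  assume A: "odd a \<and> 1 \<le> a \<and> a \<le> 2 * (M div 2) + 1"
  then obtain m where m: "a = 2*m+1" by (metis oddE)
  then show "GB a \<in> verts M" using A by (auto simp: verts_def)
qed

lemma finite_verts: "finite (verts M)"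
proof -
  have "verts M = GH ` {1..M} \<union> (\<lambda>m. GB (2*m+1)) ` {0..M div 2}" by (auto simp: verts_def)
  then show ?thesis by simp
qed


lemma indep_mono: "indep M S \<Longrightarrow> T \<subseteq> S \<Longrightarrow> indep M T"
  by (auto simp: indep_def)

lemma indep_finite: "indep M S \<Longrightarrow> finite S"
  using finite_verts unfolding indep_def by (auto intro: finite_subset)

locale ffd =
  fixes M :: int and h :: "gen \<Rightarrow> 'a::ring_1"
  assumes anti: "\<And>u v. u \<in> verts M \<Longrightarrow> v \<in> verts M \<Longrightarrow> adj u v \<Longrightarrow> h u * h v = - (h v * h u)"
    and comm: "\<And>u v. u \<in> verts M \<Longrightarrow> v \<in> verts M \<Longrightarrow> u \<noteq> v \<Longrightarrow> \<not> adj u v \<Longrightarrow> h u * h v = h v * h u"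
begin

lemma comm': "u \<in> verts M \<Longrightarrow> v \<in> verts M \<Longrightarrow> \<not> adj u v \<Longrightarrow> h u * h v = h v * h u"
  by (cases "u = v") (auto intro: comm)

lemma foldr_pull:
  assumes "distinct xs" "indep M (set xs)" "x \<in> set xs"
  shows "foldr (*) (map h xs) 1 = h x * foldr (*) (map h (remove1 x xs)) 1"
  using assms
proof (induction xs)
  case Nil then show ?case by simp
next
  case (Cons y ys)
  show ?case
  proof (cases "y = x")
    case True then show ?thesis by simp
  next
    case False
    then have x: "x \<in> set ys" using Cons by auto
    have i: "indep M (set ys)" using Cons.prems(2) by (rule indep_mono) auto
    have "foldr (*) (map h (y#ys)) 1 = h y * (h x * foldr (*) (map h (remove1 x ys)) 1)"
      using Cons.IH[OF _ i x] Cons.prems by simp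
    also have "\<dots> = (h y * h x) * foldr (*) (map h (remove1 x ys)) 1" by (simp add: mult.assoc)
    also have "h y * h x = h x * h y"
      using Cons.prems(2) x by (intro comm') (auto simp: indep_def)
    finally show ?thesis using False by (simp add: mult.assoc)
  qed
qed

lemma foldr_eq:
  assumes "distinct xs" "distinct ys" "set xs = set ys" "indep M (set xs)"
  shows "foldr (*) (map h xs) 1 = foldr (*) (map h ys) 1"
  using assms
proof (induction xs arbitrary: ys)
  case Nil then show ?case by simp
next
  case (Cons x xs)
  have x: "x \<in> set ys" using Cons.prems by auto
  have "foldr (*) (map h ys) 1 = h x * foldr (*) (map h (remove1 x ys)) 1"
    using foldr_pull[OF Cons.prems(2) _ x] Cons.prems by simp
  moreover have "foldr (*) (map h xs) 1 = foldr (*) (map h (remove1 x ys)) 1"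
  proof (rule Cons.IH)
    show "distinct xs" "distinct (remove1 x ys)" using Cons.prems by auto
    show "set xs = set (remove1 x ys)" using Cons.prems by (auto simp: set_remove1_eq)
    show "indep M (set xs)" using Cons.prems(4) by (rule indep_mono) auto
  qed
  ultimately show ?case by simp
qed

lemma hprod_list:
  assumes "indep M S" "distinct xs" "set xs = S"
  shows "hprod h S = foldr (*) (map h xs) 1"
proof -
  have "\<exists>ys. distinct ys \<and> set ys = S" using assms by blast
  then have e: "distinct (SOME ys. distinct ys \<and> set ys = S) \<and> set (SOME ys. distinct ys \<and> set ys = S) = S"
    by (rule someI_ex)
  show ?thesis unfolding hprod_def using e assms by (intro foldr_eq) auto
qed

lemma hprod_empty[simp]: "hprod h {} = 1"
  unfolding hprod_def by (subst some_equality[of _ "[]"]) auto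

lemma hprod_insert:
  assumes "indep M (insert x S)" "x \<notin> S"
  shows "hprod h (insert x S) = h x * hprod h S"
proof -
  have f: "finite S" using indep_finite[OF assms(1)] by simp
  obtain xs where xs: "distinct xs" "set xs = S" using finite_distinct_list[OF f] by blast
  have i: "indep M S" using assms(1) by (rule indep_mono) auto
  show ?thesis using hprod_list[OF assms(1), of "x#xs"] hprod_list[OF i xs] xs assms by simp
qed

lemma hprod_single[simp]: "v \<in> verts M \<Longrightarrow> hprod h {v} = h v"
  using hprod_insert[of v "{}"] by (simp add: indep_def)

definition Nb :: "gen \<Rightarrow> gen set" where "Nb v = {u. adj v u}"

lemma sign:
  assumes "indep M S" "v \<in> verts M"
  shows "hprod h S * h v = (if even (card (S \<inter> Nb v)) then h v * hprod h S else - (h v * hprod h S))"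
proof -
  have "finite S" using assms(1) by (rule indep_finite)
  then show ?thesis using assms(1)
  proof (induction S rule: finite_induct)
    case empty then show ?case by simp
  next
    case (insert x F)
    have iF: "indep M F" using insert.prems by (rule indep_mono) auto
    have xV: "x \<in> verts M" using insert.prems by (auto simp: indep_def)
    have c: "card (insert x F \<inter> Nb v) = card (F \<inter> Nb v) + (if adj v x then 1 else 0)"
      using insert.hyps by (auto simp: Nb_def)
    have hx: "h x * h v = (if adj v x then - (h v * h x) else h v * h x)"
      using anti[OF xV assms(2)] comm'[OF xV assms(2)] adj_sym[of v x] by auto
    have "hprod h (insert x F) * h v = h x * (hprod h F * h v)"
      using hprod_insert[OF insert.prems insert.hyps(2)] by (simp add: mult.assoc)
    also have "\<dots> = (if even (card (F \<inter> Nb v)) then (h x * h v) * hprod h F else - ((h x * h v) * hprod h F))"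
      using insert.IH[OF iF] by (simp add: mult.assoc)
    also have "\<dots> = (if even (card (insert x F \<inter> Nb v)) then h v * hprod h (insert x F) else - (h v * hprod h (insert x F)))"
      unfolding c hx hprod_insert[OF insert.prems insert.hyps(2)] by (auto simp: mult.assoc)
    finally show ?case .
  qed
qed

end

definition ct :: "nat \<Rightarrow> int \<Rightarrow> gen set" where
  "ct i m = (if i = 0 then {GH(2*m-3), GH(2*m), GB(2*m+5)}
             else if i = 1 then {GH(2*m-2), GB(2*m+1), GB(2*m+5)}
             else if i = 2 then {GH(2*m-3), GH(2*m+1), GH(2*m+4)}
             else {GH(2*m-3), GH(2*m+2), GB(2*m+5)})"

definition cv :: "nat \<Rightarrow> int \<Rightarrow> gen" where
  "cv i m = (if i < 2 then GH (2*m-1) else GB (2*m+3))"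

fun TS :: "gen \<Rightarrow> gen set set" where
  "TS (GH j) = (if odd j then {ct 0 ((j+1) div 2), ct 1 ((j+1) div 2)} else {})"
| "TS (GB a) = (if odd a then {ct 2 ((a-3) div 2), ct 3 ((a-3) div 2)} else {})"

definition istri :: "gen \<Rightarrow> gen \<Rightarrow> gen \<Rightarrow> gen \<Rightarrow> bool" where
  "istri v x y z \<longleftrightarrow> adj v x \<and> adj v y \<and> adj v z \<and> x\<noteq>y \<and> x\<noteq>z \<and> y\<noteq>z \<and> \<not>adj x y \<and> \<not>adj x z \<and> \<not> adj y z"

lemma tri_eq: "x \<noteq> y \<Longrightarrow> x \<noteq> z \<Longrightarrow> y \<noteq> z \<Longrightarrow> x \<in> A \<Longrightarrow> y \<in> A \<Longrightarrow> z \<in> A \<Longrightarrow> card A = 3 \<Longrightarrow> {x,y,z} = A"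
  by (rule card_subset_eq) (auto intro: card_ge_0_finite)

lemma card_ct3:
  "card {GH(2*m-3), GH(2*m), GB(2*m+5)} = 3" "card {GH(2*m-2), GB(2*m+1), GB(2*m+5)} = 3"
  "card {GH(2*m-3), GH(2*m+1), GH(2*m+4)} = 3" "card {GH(2*m-3), GH(2*m+2), GB(2*m+5)} = 3"
  by simp_all

lemma nb_H_odd: "adj (GH (2*m-1)) u \<longleftrightarrow> u \<in> {GH(2*m-3),GH(2*m-2),GH(2*m),GH(2*m+1),GB(2*m-1),GB(2*m+1),GB(2*m+3),GB(2*m+5)}"
  by (cases u; simp; presburger)

lemma nb_H_even: "adj (GH (2*m)) u \<longleftrightarrow> u \<in> {GH(2*m-2),GH(2*m-1),GH(2*m+1),GH(2*m+2),GB(2*m-1),GB(2*m+1)}"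
  by (cases u; simp; presburger)

lemma nb_B_odd: "adj (GB (2*m+3)) u \<longleftrightarrow> u \<in> {GH(2*m-3),GH(2*m-1),GH(2*m+1),GH(2*m+2),GH(2*m+3),GH(2*m+4),GB(2*m+1),GB(2*m+5)}"
  by (cases u; simp; presburger)

lemma nb_B_even: "even a \<Longrightarrow> \<not> adj (GB a) u"
  by (cases u) auto

lemma tri_H_odd_mem: "istri (GH (2*m-1)) x y z
  \<Longrightarrow> (x \<in> {GH(2*m-3), GH(2*m), GB(2*m+5)} \<and> y \<in> {GH(2*m-3), GH(2*m), GB(2*m+5)} \<and> z \<in> {GH(2*m-3), GH(2*m), GB(2*m+5)}) \<or> (x \<in> {GH(2*m-2), GB(2*m+1), GB(2*m+5)} \<and> y \<in> {GH(2*m-2), GB(2*m+1), GB(2*m+5)} \<and> z \<in> {GH(2*m-2), GB(2*m+1), GB(2*m+5)})"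
  unfolding istri_def nb_H_odd
  apply (elim conjE insertE emptyE)
  apply (simp_all)
  done

lemma tri_H_odd: assumes t: "istri (GH (2*m-1)) x y z" shows "{x,y,z} = {GH(2*m-3), GH(2*m), GB(2*m+5)} \<or> {x,y,z} = {GH(2*m-2), GB(2*m+1), GB(2*m+5)}" (is "_ = ?P \<or> _ = ?Q")
proof -
  have d: "x \<noteq> y" "x \<noteq> z" "y \<noteq> z" using t unfolding istri_def by auto
  from tri_H_odd_mem[OF t] show ?thesis
  proof (elim disjE conjE)
    assume "x \<in> ?P" "y \<in> ?P" "z \<in> ?P"
    then have "{x,y,z} = ?P" by (intro tri_eq[OF d] card_ct3(1))
    then show ?thesis by (rule disjI1)
  next
    assume "x \<in> ?Q" "y \<in> ?Q" "z \<in> ?Q"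
    then have "{x,y,z} = ?Q" by (intro tri_eq[OF d] card_ct3(2))
    then show ?thesis by (rule disjI2)
  qed
qed


lemma tri_H_even: "\<not> istri (GH (2*m)) x y z"
  unfolding istri_def nb_H_even
  apply clarify
  apply (elim conjE insertE emptyE)
  apply (simp_all)
  done

lemma tri_B_odd_mem: "istri (GB (2*m+3)) x y z
  \<Longrightarrow> (x \<in> {GH(2*m-3), GH(2*m+1), GH(2*m+4)} \<and> y \<in> {GH(2*m-3), GH(2*m+1), GH(2*m+4)} \<and> z \<in> {GH(2*m-3), GH(2*m+1), GH(2*m+4)}) \<or> (x \<in> {GH(2*m-3), GH(2*m+2), GB(2*m+5)} \<and> y \<in> {GH(2*m-3), GH(2*m+2), GB(2*m+5)} \<and> z \<in> {GH(2*m-3), GH(2*m+2), GB(2*m+5)})"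
  unfolding istri_def nb_B_odd
  apply (elim conjE insertE emptyE)
  apply (simp_all)
  done

lemma tri_B_odd: assumes t: "istri (GB (2*m+3)) x y z" shows "{x,y,z} = {GH(2*m-3), GH(2*m+1), GH(2*m+4)} \<or> {x,y,z} = {GH(2*m-3), GH(2*m+2), GB(2*m+5)}" (is "_ = ?P \<or> _ = ?Q")
proof -
  have d: "x \<noteq> y" "x \<noteq> z" "y \<noteq> z" using t unfolding istri_def by auto
  from tri_B_odd_mem[OF t] show ?thesis
  proof (elim disjE conjE)
    assume "x \<in> ?P" "y \<in> ?P" "z \<in> ?P"
    then have "{x,y,z} = ?P" by (intro tri_eq[OF d] card_ct3(3))
    then show ?thesis by (rule disjI1)
  next
    assume "x \<in> ?Q" "y \<in> ?Q" "z \<in> ?Q"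
    then have "{x,y,z} = ?Q" by (intro tri_eq[OF d] card_ct3(4))
    then show ?thesis by (rule disjI2)
  qed
qed


lemma tri_TS: assumes t: "istri v x y z" shows "{x,y,z} \<in> TS v"
proof (cases v)
  case (GH j)
  show ?thesis
  proof (cases "odd j")
    case True
    define m where "m = (j+1) div 2"
    have j: "j = 2*m-1" unfolding m_def using True by presburger
    have "istri (GH (2*m-1)) x y z" using t GH j by simp
    then have "{x,y,z} = ct 0 m \<or> {x,y,z} = ct 1 m" using tri_H_odd[of m x y z] by (simp add: ct_def)
    then show ?thesis using GH True by (simp add: m_def[symmetric])
  next
    case False
    define m where "m = j div 2"
    have j: "j = 2*m" unfolding m_def using False by presburger
    have "istri (GH (2*m)) x y z" using t GH j by simp
    then show ?thesis using tri_H_even[of m x y z] by simp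
  qed
next
  case (GB a)
  show ?thesis
  proof (cases "odd a")
    case True
    define m where "m = (a-3) div 2"
    have j: "a = 2*m+3" unfolding m_def using True by presburger
    have "istri (GB (2*m+3)) x y z" using t GB j by simp
    then have "{x,y,z} = ct 2 m \<or> {x,y,z} = ct 3 m" using tri_B_odd[of m x y z] by (simp add: ct_def)
    then show ?thesis using GB True by (simp add: m_def[symmetric])
  next
    case False
    then show ?thesis using nb_B_even t GB by (auto simp: istri_def)
  qed
qed

lemma TS_ct: assumes T: "T \<in> TS v" shows "\<exists>m i. i < 4 \<and> v = cv i m \<and> T = ct i m"
proof (cases v)
  case (GH j)
  then have o: "odd j" using T by (auto split: if_splits)
  define m where "m = (j+1) div 2"
  have j: "j = 2*m-1" unfolding m_def using o by presburger
  have "T = ct 0 m \<or> T = ct 1 m" using T GH o by (simp add: m_def[symmetric])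
  moreover have "v = cv 0 m" "v = cv 1 m" using GH j by (simp_all add: cv_def)
  ultimately show ?thesis by (metis zero_less_numeral one_less_numeral_iff semiring_norm(76))
next
  case (GB a)
  then have o: "odd a" using T by (auto split: if_splits)
  define m where "m = (a-3) div 2"
  have j: "a = 2*m+3" unfolding m_def using o by presburger
  have "T = ct 2 m \<or> T = ct 3 m" using T GB o by (simp add: m_def[symmetric])
  moreover have "v = cv 2 m" "v = cv 3 m" using GB j by (simp_all add: cv_def)
  moreover have "(2::nat) < 4" "(3::nat) < 4" by simp_all
  ultimately show ?thesis by blast
qed

lemma card2: "card {A, B} \<le> 2"
  by (cases "A = B") auto

lemma card_TS: "card (TS v) \<le> 2"
  by (cases v) (auto simp: card2)


definition incn :: "int \<Rightarrow> gen \<Rightarrow> bool" where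
  "incn m w = (case w of GH j \<Rightarrow> 2*m-5 \<le> j \<and> j \<le> 2*m+6 | GB a \<Rightarrow> odd a \<and> 2*m-3 \<le> a \<and> a \<le> 2*m+7)"

definition clw :: "nat \<Rightarrow> int \<Rightarrow> gen set" where
  "clw i m = insert (cv i m) (ct i m)"

lemma four_cases: "(i::nat) < 4 \<Longrightarrow> i = 0 \<or> i = 1 \<or> i = 2 \<or> i = 3" by auto

lemma cn_iff:
  assumes "i < 4"
  shows "(w \<in> clw i m \<or> (\<exists>t\<in>clw i m. adj t w)) \<longleftrightarrow> incn m w"
  using four_cases[OF assms]
  apply (elim disjE)
  apply (cases w; simp add: clw_def ct_def cv_def incn_def; presburger)+
  done

lemma ct_nb: "i < 4 \<Longrightarrow> t \<in> ct i m \<Longrightarrow> adj (cv i m) t"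
  apply (drule four_cases)
  apply (elim disjE; auto simp: ct_def cv_def; presburger)
  done

lemma ct_indep: "i < 4 \<Longrightarrow> t \<in> ct i m \<Longrightarrow> u \<in> ct i m \<Longrightarrow> \<not> adj t u"
  apply (drule four_cases)
  apply (elim disjE; auto simp: ct_def cv_def; presburger)
  done

lemma card_ct: "i < 4 \<Longrightarrow> card (ct i m) = 3"
  apply (drule four_cases)
  apply (elim disjE; simp add: ct_def)
  done

lemma cv_notin: "i < 4 \<Longrightarrow> cv i m \<notin> ct i m"
  using ct_nb adj_irrefl by blast

lemma ct_inj:
  assumes "i < 4" "i' < 4" "cv i m = cv i' m'" "ct i m = ct i' m'"
  shows "i = i' \<and> m = m'"
proof -
  have mm: "m = m'" using assms(3) by (auto simp: cv_def split: if_splits)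
  have hf: "(i < 2) = (i' < 2)" using assms(3) by (auto simp: cv_def split: if_splits)
  have e: "ct i m = ct i' m" using assms(4) mm by simp
  have a1: "GH (2*m-3) \<in> ct 0 m" "GH (2*m-3) \<notin> ct 1 m" "GH (2*m+1) \<in> ct 2 m" "GH (2*m+1) \<notin> ct 3 m"
    by (simp_all add: ct_def)
  then have d: "ct 0 m \<noteq> ct 1 m" "ct 1 m \<noteq> ct 0 m" "ct 2 m \<noteq> ct 3 m" "ct 3 m \<noteq> ct 2 m" by blast+
  have "i = i'"
    using four_cases[OF assms(1)] four_cases[OF assms(2)] hf e d
    by (elim disjE) (simp_all only: One_nat_def[symmetric], simp_all)
  then show ?thesis using mm by simp
qed

lemma m_range:
  assumes "i < 4" "clw i m \<subseteq> verts M"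
  shows "2 \<le> m \<and> m \<le> M div 2 - 2"
  using four_cases[OF assms(1)] assms(2)
  apply (elim disjE; simp add: clw_def ct_def cv_def)
  apply presburger+
  done


lemma sum_invol:
  fixes g :: "'b \<Rightarrow> 'a::ab_group_add"
  assumes "finite A" "\<And>x. x \<in> A \<Longrightarrow> \<sigma> x \<in> A" "\<And>x. x \<in> A \<Longrightarrow> \<sigma> (\<sigma> x) = x"
    "\<And>x. x \<in> A \<Longrightarrow> \<sigma> x \<noteq> x" "\<And>x. x \<in> A \<Longrightarrow> g (\<sigma> x) = - g x"
  shows "sum g A = 0"
  using assms
proof (induction "card A" arbitrary: A rule: less_induct)
  case less
  show ?case
  proof (cases "A = {}")
    case True then show ?thesis by simp
  next
    case False
    then obtain x where x: "x \<in> A" by blast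
    let ?B = "A - {x, \<sigma> x}"
    have sx: "\<sigma> x \<in> A" "\<sigma> x \<noteq> x" using less.prems x by auto
    have fB: "finite ?B" using less.prems by simp
    have cB: "card ?B < card A" using less.prems(1) x by (intro psubset_card_mono) auto
    have B0: "sum g ?B = 0"
    proof (rule less.hyps[OF cB fB])
      fix y assume y: "y \<in> ?B"
      then have yA: "y \<in> A" by simp
      have "\<sigma> y \<noteq> x" using less.prems(3)[OF yA] y by auto
      moreover have "\<sigma> y \<noteq> \<sigma> x"
      proof
        assume "\<sigma> y = \<sigma> x"
        then have "y = x" using less.prems(3)[OF yA] less.prems(3)[OF x] by metis
        then show False using y by simp
      qed
      ultimately show "\<sigma> y \<in> ?B" using less.prems(2)[OF yA] by auto
      show "\<sigma> (\<sigma> y) = y" "\<sigma> y \<noteq> y" "g (\<sigma> y) = - g y" using less.prems yA by auto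
    qed
    have "sum g A = sum g ?B + sum g {x, \<sigma> x}"
      using sum.subset_diff[of "{x, \<sigma> x}" A g] less.prems(1) x sx by simp
    also have "sum g {x, \<sigma> x} = 0" using sx less.prems(5)[OF x] by simp
    finally show ?thesis using B0 by simp
  qed
qed

context ffd begin

definition ff :: "gen \<times> gen set \<Rightarrow> 'a" where "ff p = h (fst p) * hprod h (snd p)"

definition O1 :: "nat \<Rightarrow> (gen \<times> gen set) set" where
  "O1 k = {p. fst p \<in> verts M \<and> indep M (snd p) \<and> card (snd p) = k \<and> card (snd p \<inter> Nb (fst p)) = 1}"

definition sig :: "gen \<times> gen set \<Rightarrow> gen \<times> gen set" where
  "sig p = (the_elem (snd p \<inter> Nb (fst p)), insert (fst p) (snd p - {the_elem (snd p \<inter> Nb (fst p))}))"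

lemma finite_O1: "finite (O1 k)"
proof -
  have "O1 k \<subseteq> verts M \<times> Pow (verts M)" by (auto simp: O1_def indep_def)
  then show ?thesis using finite_verts by (auto intro: finite_subset)
qed

lemma sig_props:
  assumes p: "(v,S) \<in> O1 k"
  shows "sig (v,S) \<in> O1 k \<and> sig (sig (v,S)) = (v,S) \<and> sig (v,S) \<noteq> (v,S) \<and> ff (sig (v,S)) = - ff (v,S)"
proof -
  from p have vV: "v \<in> verts M" and iS: "indep M S" and cS: "card S = k" and c1: "card (S \<inter> Nb v) = 1"
    by (auto simp: O1_def)
  obtain u where u: "S \<inter> Nb v = {u}" using c1 card_1_singleton_iff by (metis One_nat_def)
  have uS: "u \<in> S" and avu: "adj v u" using u by (auto simp: Nb_def)
  have uV: "u \<in> verts M" using uS iS by (auto simp: indep_def)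
  have vS: "v \<notin> S" using uS avu iS by (auto simp: indep_def)
  have uv: "u \<noteq> v" using avu by auto
  have fS: "finite S" using iS by (rule indep_finite)
  define S' where "S' = insert v (S - {u})"
  have sg: "sig (v,S) = (u, S')" using u by (simp add: sig_def S'_def)
  have nv: "\<And>w. w \<in> S \<Longrightarrow> w \<noteq> u \<Longrightarrow> \<not> adj v w" using u by (auto simp: Nb_def)
  have iS': "indep M S'"
    unfolding indep_def S'_def
  proof (intro conjI ballI)
    show "insert v (S - {u}) \<subseteq> verts M" using vV iS by (auto simp: indep_def)
    fix a b assume a: "a \<in> insert v (S - {u})" and b: "b \<in> insert v (S - {u})"
    show "\<not> adj a b"
      using a b nv iS adj_sym[of a b] by (auto simp: indep_def)
  qed
  have cS': "card S' = k"
  proof -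
    have "card S > 0" using fS uS card_gt_0_iff by blast
    then show ?thesis using fS uS vS cS by (simp add: S'_def card_Diff_singleton)
  qed
  have nu: "S' \<inter> Nb u = {v}"
  proof -
    have "v \<in> Nb u" using avu adj_sym[of v u] by (simp add: Nb_def)
    moreover have "\<And>w. w \<in> S - {u} \<Longrightarrow> \<not> adj u w" using iS uS by (auto simp: indep_def)
    ultimately show ?thesis by (auto simp: S'_def Nb_def)
  qed
  have s1: "sig (v,S) \<in> O1 k" using sg uV iS' cS' nu by (simp add: O1_def)
  have e1: "S' - {v} = S - {u}" using vS by (auto simp: S'_def)
  have s2: "sig (sig (v,S)) = (v,S)"
  proof -
    have "sig (u, S') = (v, insert u (S' - {v}))" unfolding sig_def using nu by simp
    also have "insert u (S' - {v}) = S" using e1 uS by auto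
    finally show ?thesis using sg by simp
  qed
  have s3: "sig (v,S) \<noteq> (v,S)" using sg uv by simp
  have vnot: "v \<notin> S - {u}" using vS by simp
  have unot: "u \<notin> S - {u}" by simp
  have iS2: "indep M (insert u (S - {u}))" using iS uS by (simp add: insert_absorb)
  have "ff (sig (v,S)) = h u * (h v * hprod h (S - {u}))"
    using sg hprod_insert[OF _ vnot] iS' by (simp add: ff_def S'_def)
  also have "\<dots> = - (h v * (h u * hprod h (S - {u})))"
    using anti[OF uV vV] adj_sym[of u v] avu by (simp add: mult.assoc[symmetric])
  also have "h v * (h u * hprod h (S - {u})) = ff (v,S)"
    using hprod_insert[OF iS2 unot] uS by (simp add: ff_def insert_absorb)
  finally have s4: "ff (sig (v,S)) = - ff (v,S)" .
  show ?thesis using s1 s2 s3 s4 by blast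
qed

lemma O1_zero: "sum ff (O1 k) = 0"
  by (rule sum_invol[where \<sigma> = sig]) (use finite_O1 sig_props in auto)

lemma hprod_union:
  assumes "indep M (A \<union> B)" "A \<inter> B = {}"
  shows "hprod h (A \<union> B) = hprod h A * hprod h B"
proof -
  have "finite A" using assms(1) indep_finite by (auto intro: finite_subset)
  then show ?thesis using assms
  proof (induction A rule: finite_induct)
    case empty then show ?case by simp
  next
    case (insert x F)
    have i1: "indep M (insert x (F \<union> B))" using insert.prems by simp
    have x1: "x \<notin> F \<union> B" using insert.hyps insert.prems by auto
    have i2: "indep M (insert x F)" using insert.prems(1) by (rule indep_mono) auto
    have "hprod h (insert x F \<union> B) = h x * hprod h (F \<union> B)"
      using hprod_insert[OF i1 x1] by simp
    also have "hprod h (F \<union> B) = hprod h F * hprod h B"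
      using insert.prems by (intro insert.IH) (auto elim: indep_mono)
    also have "h x * (hprod h F * hprod h B) = hprod h (insert x F) * hprod h B"
      using hprod_insert[OF i2 insert.hyps(2)] by (simp add: mult.assoc)
    finally show ?case .
  qed
qed

lemma cswap: "u \<in> verts M \<Longrightarrow> w \<in> verts M \<Longrightarrow> \<not> adj u w \<Longrightarrow> h u * (h w * r) = h w * (h u * r)"
  using comm'[of u w] by (simp add: mult.assoc[symmetric])
lemma aswap: "u \<in> verts M \<Longrightarrow> w \<in> verts M \<Longrightarrow> adj u w \<Longrightarrow> h u * (h w * r) = - (h w * (h u * r))"
  using anti[of u w] by (simp add: mult.assoc[symmetric])

end

lemma card_pick: "finite A \<Longrightarrow> Suc n \<le> card A \<Longrightarrow> \<exists>x\<in>A. n \<le> card (A - {x})"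
proof -
  assume f: "finite A" and c: "Suc n \<le> card A"
  then have "A \<noteq> {}" by auto
  then obtain x where x: "x \<in> A" by blast
  then have "card (A - {x}) = card A - 1" using f by (simp add: card_Diff_singleton)
  then show ?thesis using x c by (intro bexI[of _ x]) auto
qed

lemma four_elems:
  assumes "finite T" "4 \<le> card T"
  shows "\<exists>a b c d. a\<in>T \<and> b\<in>T \<and> c\<in>T \<and> d\<in>T \<and> a\<noteq>b \<and> a\<noteq>c \<and> a\<noteq>d \<and> b\<noteq>c \<and> b\<noteq>d \<and> c\<noteq>d"
proof -
  obtain a where a: "a \<in> T" "3 \<le> card (T - {a})" using card_pick[of T 3] assms by auto
  obtain b where b: "b \<in> T - {a}" "2 \<le> card (T - {a} - {b})" using card_pick[of "T - {a}" 2] assms a by auto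
  obtain c where c: "c \<in> T - {a} - {b}" "1 \<le> card (T - {a} - {b} - {c})" using card_pick[of "T - {a} - {b}" 1] assms b by auto
  obtain d where d: "d \<in> T - {a} - {b} - {c}" using card_pick[of "T - {a} - {b} - {c}" 0] assms c by auto
  show ?thesis using a b c d by blast
qed

lemma finite_TS: "finite (TS v)" by (cases v) auto

lemma hprod3_aux: "x \<noteq> y \<Longrightarrow> x \<noteq> z \<Longrightarrow> y \<noteq> z \<Longrightarrow> x \<notin> {y, z} \<and> y \<notin> {z}" by simp

context ffd begin

lemma cnt_le3:
  fixes v :: gen
  assumes "indep M S" shows "card (S \<inter> Nb v) \<le> 3"
proof (rule ccontr)
  assume "\<not> ?thesis"
  then have c4: "4 \<le> card (S \<inter> Nb v)" by simp
  have fin: "finite (S \<inter> Nb v)" using indep_finite[OF assms] by simp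
  obtain a b c d where abcd: "a\<in>S \<inter> Nb v" "b\<in>S \<inter> Nb v" "c\<in>S \<inter> Nb v" "d\<in>S \<inter> Nb v"
     "a\<noteq>b" "a\<noteq>c" "a\<noteq>d" "b\<noteq>c" "b\<noteq>d" "c\<noteq>d"
    using four_elems[OF fin c4] by blast
  have tri: "istri v x y z" if "x \<in> S \<inter> Nb v" "y \<in> S \<inter> Nb v" "z \<in> S \<inter> Nb v" "x\<noteq>y" "x\<noteq>z" "y\<noteq>z" for x y z
    using that assms unfolding istri_def indep_def Nb_def by auto
  have t1: "{a,b,c} \<in> TS v" by (rule tri_TS, rule tri) (use abcd in auto)
  have t2: "{a,b,d} \<in> TS v" by (rule tri_TS, rule tri) (use abcd in auto)
  have t3: "{a,c,d} \<in> TS v" by (rule tri_TS, rule tri) (use abcd in auto)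
  have n12: "{a,b,c} \<noteq> {a,b,d}" using abcd by (metis insert_iff singletonD)
  have n13: "{a,b,c} \<noteq> {a,c,d}" using abcd by (metis insert_iff singletonD)
  have n23: "{a,b,d} \<noteq> {a,c,d}" using abcd by (metis insert_iff singletonD)
  have "card {{a,b,c},{a,b,d},{a,c,d}} = 3" using n12 n13 n23 by simp
  moreover have "card {{a,b,c},{a,b,d},{a,c,d}} \<le> card (TS v)"
    using t1 t2 t3 finite_TS by (intro card_mono) auto
  ultimately show False using card_TS[of v] by simp
qed


lemma hprod3:
  assumes "indep M {x,y,z}" "x \<noteq> y" "x \<noteq> z" "y \<noteq> z"
  shows "hprod h {x,y,z} = h x * (h y * h z)"
proof -
  have i2: "indep M {y,z}" using assms(1) by (rule indep_mono) auto
  have zV: "z \<in> verts M" using assms(1) by (auto simp: indep_def)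
  have "hprod h {x,y,z} = h x * hprod h {y,z}" using hprod_insert[OF assms(1)] assms by simp
  also have "hprod h {y,z} = h y * h z" using hprod_insert[OF i2] assms zV by simp
  finally show ?thesis .
qed

lemma ct_indep': "i < 4 \<Longrightarrow> ct i m \<subseteq> verts M \<Longrightarrow> indep M (ct i m)"
  using ct_indep unfolding indep_def by blast

definition Q :: "nat \<Rightarrow> int \<Rightarrow> 'a" where "Q i m = h (cv i m) * hprod h (ct i m)"

lemma hhV: "GH j \<in> verts M \<Longrightarrow> hh M h j = h (GH j)" by (simp add: hh_def del: verts_H)
lemma hbV: "GB j \<in> verts M \<Longrightarrow> hb M h j = h (GB j)" by (simp add: hb_def del: verts_B)

lemma term0: "hh M h (2*m) * hh M h (2*m-3) * (hh M h (2*m-1) * hb M h (2*m+5)) = (if clw 0 m \<subseteq> verts M then Q 0 m else 0)"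
proof (cases "clw 0 m \<subseteq> verts M")
  case True
  let ?a = "GH (2*m-1)" let ?x = "GH (2*m-3)" let ?y = "GH (2*m)" let ?z = "GB (2*m+5)"
  have V: "?a \<in> verts M" "?x \<in> verts M" "?y \<in> verts M" "?z \<in> verts M"
    using True by (simp_all only: clw_def ct_def cv_def insert_subset) simp_all
  have ind: "indep M {?x,?y,?z}" using ct_indep'[of 0 m] True by (simp add: clw_def ct_def)
  have hp: "hprod h (ct 0 m) = h ?x * (h ?y * h ?z)" unfolding ct_def using hprod3[OF ind] by simp
  have e1: "\<And>r. h ?y * (h ?x * r) = h ?x * (h ?y * r)" using cswap[of ?y ?x] V by simp
  have e2: "\<And>r. h ?y * (h ?a * r) = - (h ?a * (h ?y * r))" using aswap[of ?y ?a] V by simp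
  have e3: "\<And>r. h ?x * (h ?a * r) = - (h ?a * (h ?x * r))" using aswap[of ?x ?a] V by simp
  show ?thesis using True
    by (simp add: Q_def hp cv_def hhV[OF V(1)] hhV[OF V(2)] hhV[OF V(3)] hbV[OF V(4)] mult.assoc e1 e2 e3)
next
  case False
  then show ?thesis by (auto simp: hh_def hb_def clw_def ct_def cv_def)
qed

lemma term1: "hh M h (2*m-2) * hb M h (2*m+1) * (hh M h (2*m-1) * hb M h (2*m+5)) = (if clw 1 m \<subseteq> verts M then Q 1 m else 0)"
proof (cases "clw 1 m \<subseteq> verts M")
  case True
  let ?a = "GH (2*m-1)" let ?x = "GH (2*m-2)" let ?y = "GB (2*m+1)" let ?z = "GB (2*m+5)"
  have V: "?a \<in> verts M" "?x \<in> verts M" "?y \<in> verts M" "?z \<in> verts M"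
    using True by (simp_all only: clw_def ct_def cv_def insert_subset) simp_all
  have ind: "indep M {?x,?y,?z}" using ct_indep'[of 1 m] True by (simp add: clw_def ct_def)
  have hp: "hprod h {?x,?y,?z} = h ?x * (h ?y * h ?z)" using hprod3[OF ind] by simp
  have e2: "\<And>r. h ?y * (h ?a * r) = - (h ?a * (h ?y * r))" using aswap[of ?y ?a] V by simp
  have e3: "\<And>r. h ?x * (h ?a * r) = - (h ?a * (h ?x * r))" using aswap[of ?x ?a] V by simp
  show ?thesis using True
    by (simp add: Q_def hp ct_def cv_def hhV[OF V(1)] hhV[OF V(2)] hbV[OF V(3)] hbV[OF V(4)] mult.assoc e2 e3)
next
  case False
  then show ?thesis by (auto simp: hh_def hb_def clw_def ct_def cv_def)
qed

lemma term2: "hh M h (2*m-3) * hb M h (2*m+3) * (hh M h (2*m+4) * hh M h (2*m+1)) = - (if clw 2 m \<subseteq> verts M then Q 2 m else 0)"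
proof (cases "clw 2 m \<subseteq> verts M")
  case True
  let ?a = "GB (2*m+3)" let ?x = "GH (2*m-3)" let ?y = "GH (2*m+1)" let ?z = "GH (2*m+4)"
  have V: "?a \<in> verts M" "?x \<in> verts M" "?y \<in> verts M" "?z \<in> verts M"
    using True by (simp_all only: clw_def ct_def cv_def insert_subset) simp_all
  have ind: "indep M {?x,?y,?z}" using ct_indep'[of 2 m] True by (simp add: clw_def ct_def)
  have hp: "hprod h (ct 2 m) = h ?x * (h ?y * h ?z)" unfolding ct_def using hprod3[OF ind] by simp
  have e1: "h ?z * h ?y = h ?y * h ?z" using comm'[of ?z ?y] V by simp
  have e3: "\<And>r. h ?x * (h ?a * r) = - (h ?a * (h ?x * r))" using aswap[of ?x ?a] V by simp
  show ?thesis using True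
    by (simp add: Q_def hp cv_def hhV[OF V(2)] hhV[OF V(3)] hhV[OF V(4)] hbV[OF V(1)] mult.assoc e1 e3)
next
  case False
  then show ?thesis by (auto simp: hh_def hb_def clw_def ct_def cv_def)
qed

lemma term3: "hh M h (2*m-3) * hb M h (2*m+3) * (hh M h (2*m+2) * hb M h (2*m+5)) = - (if clw 3 m \<subseteq> verts M then Q 3 m else 0)"
proof (cases "clw 3 m \<subseteq> verts M")
  case True
  let ?a = "GB (2*m+3)" let ?x = "GH (2*m-3)" let ?y = "GH (2*m+2)" let ?z = "GB (2*m+5)"
  have V: "?a \<in> verts M" "?x \<in> verts M" "?y \<in> verts M" "?z \<in> verts M"
    using True by (simp_all only: clw_def ct_def cv_def insert_subset) simp_all
  have ind: "indep M {?x,?y,?z}" using ct_indep'[of 3 m] True by (simp add: clw_def ct_def)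
  have hp: "hprod h (ct 3 m) = h ?x * (h ?y * h ?z)" unfolding ct_def using hprod3[OF ind] by simp
  have e3: "\<And>r. h ?x * (h ?a * r) = - (h ?a * (h ?x * r))" using aswap[of ?x ?a] V by simp
  show ?thesis using True
    by (simp add: Q_def hp cv_def hhV[OF V(2)] hhV[OF V(3)] hbV[OF V(4)] hbV[OF V(1)] mult.assoc e3)
next
  case False
  then show ?thesis by (auto simp: hh_def hb_def clw_def ct_def cv_def)
qed

definition Iset :: "int \<Rightarrow> nat set" where "Iset m = {i. i < 4 \<and> clw i m \<subseteq> verts M}"

lemma sumQ: "(\<Sum>i\<in>Iset m. Q i m) = Aop M h m * Cop M h (m+1) - Cop M h m * Aop M h (m+2)"
proof -
  have "Iset m = {i\<in>{..<4}. clw i m \<subseteq> verts M}" by (auto simp: Iset_def)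
  then have "(\<Sum>i\<in>Iset m. Q i m) = (\<Sum>i\<in>{..<4}. if clw i m \<subseteq> verts M then Q i m else 0)"
    by (simp only: sum.inter_filter[OF finite_lessThan])
  also have "{..<4::nat} = {0,1,2,3}" by auto
  finally have s: "(\<Sum>i\<in>Iset m. Q i m) = (if clw 0 m \<subseteq> verts M then Q 0 m else 0) + (if clw 1 m \<subseteq> verts M then Q 1 m else 0)
     + (if clw 2 m \<subseteq> verts M then Q 2 m else 0) + (if clw 3 m \<subseteq> verts M then Q 3 m else 0)"
    by (simp add: add.assoc)
  have c1: "Cop M h (m+1) = hh M h (2*m-1) * hb M h (2*m+5)"
  proof -
    have e: "2*(m+1)-3 = 2*m-1" "2*(m+1)+3 = 2*m+5" by simp_all
    show ?thesis by (simp only: Cop_def e)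
  qed
  have a2: "Aop M h (m+2) = hh M h (2*m+4) * hh M h (2*m+1) + hh M h (2*m+2) * hb M h (2*m+5)"
  proof -
    have e: "2*(m+2)-3 = 2*m+1" "2*(m+2)-2 = 2*m+2" "2*(m+2)+1 = 2*m+5" "2*(m+2) = 2*m+4" by simp_all
    show ?thesis unfolding Aop_def e(1-3)[symmetric] by simp
  qed
  have L: "Aop M h m * Cop M h (m+1) = hh M h (2*m) * hh M h (2*m-3) * (hh M h (2*m-1) * hb M h (2*m+5))
      + hh M h (2*m-2) * hb M h (2*m+1) * (hh M h (2*m-1) * hb M h (2*m+5))"
    unfolding c1 Aop_def by (simp add: distrib_right)
  have R: "Cop M h m * Aop M h (m+2) = hh M h (2*m-3) * hb M h (2*m+3) * (hh M h (2*m+4) * hh M h (2*m+1))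
      + hh M h (2*m-3) * hb M h (2*m+3) * (hh M h (2*m+2) * hb M h (2*m+5))"
    unfolding a2 Cop_def by (simp add: distrib_left)
  have alg: "\<And>a b c d::'a. a + b + c + d = (a + b) - (- c + - d)" by (simp add: algebra_simps)
  show ?thesis unfolding s L R term0 term1 term2 term3 by (rule alg)
qed

end


context ffd begin

definition O3 :: "nat \<Rightarrow> (gen \<times> gen set) set" where
  "O3 k = {p. fst p \<in> verts M \<and> indep M (snd p) \<and> card (snd p) = k \<and> card (snd p \<inter> Nb (fst p)) = 3}"

definition Rs :: "nat \<Rightarrow> int \<Rightarrow> gen set set" where
  "Rs k m = {R. indep M R \<and> card R = k - 3 \<and> (\<forall>w\<in>R. \<not> incn m w)}"

definition W :: "nat \<Rightarrow> (int \<times> nat \<times> gen set) set" where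
  "W k = Sigma {2..M div 2 - 2} (\<lambda>m. Sigma (Iset m) (\<lambda>i. Rs k m))"

definition phi :: "int \<times> nat \<times> gen set \<Rightarrow> gen \<times> gen set" where
  "phi x = (case x of (m, i, R) \<Rightarrow> (cv i m, ct i m \<union> R))"

lemma W_good:
  assumes i: "i < 4" and cl: "clw i m \<subseteq> verts M" and R: "R \<in> Rs k m" and k: "3 \<le> k"
  shows "ct i m \<inter> R = {}" "indep M (ct i m \<union> R)" "card (ct i m \<union> R) = k"
    "(ct i m \<union> R) \<inter> Nb (cv i m) = ct i m" "cv i m \<in> verts M"
proof -
  have iR: "indep M R" and cR: "card R = k - 3" and nR: "\<And>w. w \<in> R \<Longrightarrow> \<not> incn m w"
    using R by (auto simp: Rs_def)
  have inc: "\<And>w. w \<in> clw i m \<Longrightarrow> incn m w" using cn_iff[OF i] by blast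
  have inc2: "\<And>t w. t \<in> clw i m \<Longrightarrow> adj t w \<Longrightarrow> incn m w" using cn_iff[OF i] by blast
  have ctsub: "ct i m \<subseteq> clw i m" "cv i m \<in> clw i m" by (auto simp: clw_def)
  show d: "ct i m \<inter> R = {}" using inc nR ctsub by blast
  show "cv i m \<in> verts M" using cl ctsub by blast
  show ind: "indep M (ct i m \<union> R)"
    unfolding indep_def
  proof (intro conjI ballI)
    show "ct i m \<union> R \<subseteq> verts M" using cl ctsub iR by (auto simp: indep_def)
    fix a b assume a: "a \<in> ct i m \<union> R" and b: "b \<in> ct i m \<union> R"
    show "\<not> adj a b"
    proof
      assume ab: "adj a b"
      show False
      proof (cases "a \<in> ct i m")
        case True
        show False
        proof (cases "b \<in> ct i m")
          case True then show False using ct_indep[OF i \<open>a \<in> ct i m\<close>] ab by blast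
        next
          case False then have "b \<in> R" using b by blast
          then show False using inc2[of a b] ab ctsub \<open>a \<in> ct i m\<close> nR by blast
        qed
      next
        case False then have aR: "a \<in> R" using a by blast
        show False
        proof (cases "b \<in> ct i m")
          case True then show False using inc2[of b a] ab adj_sym[of a b] ctsub aR nR by blast
        next
          case False then have "b \<in> R" using b by blast
          then show False using iR aR ab by (auto simp: indep_def)
        qed
      qed
    qed
  qed
  have fR: "finite R" using iR by (rule indep_finite)
  show "card (ct i m \<union> R) = k" using card_Un_disjoint[OF _ fR d] card_ct[OF i] cR k
    by (simp add: ct_def)
  have "ct i m \<subseteq> Nb (cv i m)" using ct_nb[OF i] by (auto simp: Nb_def)
  moreover have "R \<inter> Nb (cv i m) = {}" using inc2[of "cv i m"] ctsub nR by (auto simp: Nb_def)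
  ultimately show "(ct i m \<union> R) \<inter> Nb (cv i m) = ct i m" by blast
qed

lemma finite_Rs: "finite (Rs k m)"
proof -
  have "Rs k m \<subseteq> Pow (verts M)" by (auto simp: Rs_def indep_def)
  then show ?thesis using finite_verts by (auto intro: finite_subset)
qed

lemma finite_Iset: "finite (Iset m)" by (auto simp: Iset_def)

lemma phi_into: assumes "x \<in> W k" "3 \<le> k" shows "phi x \<in> O3 k"
proof -
  obtain m i R where x: "x = (m,i,R)" by (cases x) auto
  have i: "i < 4" "clw i m \<subseteq> verts M" "R \<in> Rs k m" using assms x by (auto simp: W_def Iset_def)
  note g = W_good[OF i assms(2)]
  show ?thesis using g card_ct[OF i(1)] by (simp add: x phi_def O3_def)
qed

lemma phi_inj: assumes "3 \<le> k" shows "inj_on phi (W k)"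
proof
  fix x y assume x: "x \<in> W k" and y: "y \<in> W k" and e: "phi x = phi y"
  obtain m i R where xx: "x = (m,i,R)" by (cases x) auto
  obtain m' i' R' where yy: "y = (m',i',R')" by (cases y) auto
  have i: "i < 4" "clw i m \<subseteq> verts M" "R \<in> Rs k m" using x xx by (auto simp: W_def Iset_def)
  have i': "i' < 4" "clw i' m' \<subseteq> verts M" "R' \<in> Rs k m'" using y yy by (auto simp: W_def Iset_def)
  note g = W_good[OF i assms] and g' = W_good[OF i' assms]
  have cv: "cv i m = cv i' m'" and U: "ct i m \<union> R = ct i' m' \<union> R'" using e xx yy by (auto simp: phi_def)
  have "ct i m = ct i' m'" using g(4) g'(4) cv U by simp
  then have im: "i = i' \<and> m = m'" using ct_inj[OF i(1) i'(1) cv] by simp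
  have "R = (ct i m \<union> R) - ct i m" using g(1) by blast
  also have "\<dots> = (ct i' m' \<union> R') - ct i' m'" using U im by simp
  also have "\<dots> = R'" using g'(1) by blast
  finally show "x = y" using xx yy im by simp
qed

lemma phi_onto: assumes "p \<in> O3 k" shows "p \<in> phi ` W k"
proof -
  obtain v S where p: "p = (v,S)" by (cases p) auto
  have vV: "v \<in> verts M" and iS: "indep M S" and cS: "card S = k" and c3: "card (S \<inter> Nb v) = 3"
    using assms p by (auto simp: O3_def)
  obtain x y z where T: "S \<inter> Nb v = {x,y,z}" and d: "x \<noteq> y" "y \<noteq> z" "x \<noteq> z"
    using c3 card_3_iff by metis
  have "istri v x y z" using T d iS unfolding istri_def indep_def Nb_def by blast
  then have "S \<inter> Nb v \<in> TS v" using T tri_TS by simp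
  then obtain m i where i: "i < 4" and vc: "v = cv i m" and Tc: "S \<inter> Nb v = ct i m" using TS_ct by blast
  have SV: "S \<subseteq> verts M" using iS by (simp add: indep_def)
  have cl: "clw i m \<subseteq> verts M" using vV SV Tc by (auto simp: clw_def vc)
  have mr: "m \<in> {2..M div 2 - 2}" using m_range[OF i cl] by simp
  define R where "R = S - ct i m"
  have fS: "finite S" using iS by (rule indep_finite)
  have ctS: "ct i m \<subseteq> S" using Tc by blast
  have vS: "v \<notin> S"
  proof
    assume "v \<in> S"
    moreover have "x \<in> S" "adj v x" using T by (auto simp: Nb_def)
    ultimately show False using iS by (auto simp: indep_def)
  qed
  have Rin: "R \<in> Rs k m"
    unfolding Rs_def
  proof (intro CollectI conjI ballI)
    show "indep M R" using iS by (rule indep_mono) (auto simp: R_def)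
    show "card R = k - 3" using card_Diff_subset[OF _ ctS] fS cS card_ct[OF i] finite_subset[OF ctS fS]
      by (simp add: R_def)
    fix w assume w: "w \<in> R"
    show "\<not> incn m w"
    proof
      assume "incn m w"
      then have "w \<in> clw i m \<or> (\<exists>t\<in>clw i m. adj t w)" using cn_iff[OF i] by blast
      moreover have "w \<notin> clw i m" using w vS vc by (auto simp: R_def clw_def)
      moreover have "\<not> adj v w" using w Tc by (auto simp: R_def Nb_def)
      moreover have "\<And>t. t \<in> ct i m \<Longrightarrow> \<not> adj t w" using w ctS iS by (auto simp: R_def indep_def)
      ultimately show False using vc by (auto simp: clw_def)
    qed
  qed
  have "(m, i, R) \<in> W k" using mr i cl Rin by (simp add: W_def Iset_def)
  moreover have "phi (m,i,R) = p" using p vc ctS by (auto simp: phi_def R_def)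
  ultimately show ?thesis by (metis image_eqI)
qed

lemma O3_bij: "3 \<le> k \<Longrightarrow> bij_betw phi (W k) (O3 k)"
  unfolding bij_betw_def using phi_inj phi_into phi_onto by blast

end

locale ffd2 = ffd +
  assumes extra: "\<And>m. 2 \<le> m \<Longrightarrow> m \<le> M div 2 - 2 \<Longrightarrow> Aop M h m * Cop M h (m + 1) = Cop M h m * Aop M h (m + 2)"
begin

lemma O3_zero: "sum ff (O3 k) = 0"
proof (cases "k < 3")
  case True
  have "O3 k = {}"
  proof (rule ccontr)
    assume "O3 k \<noteq> {}"
    then obtain v S where "(v,S) \<in> O3 k" by auto
    then have "indep M S" "card S = k" "card (S \<inter> Nb v) = 3" by (auto simp: O3_def)
    moreover have "card (S \<inter> Nb v) \<le> card S" using indep_finite[OF \<open>indep M S\<close>] by (intro card_mono) auto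
    ultimately show False using True by simp
  qed
  then show ?thesis by simp
next
  case False
  then have k: "3 \<le> k" by simp
  have "sum ff (O3 k) = (\<Sum>x\<in>W k. ff (phi x))"
    using sum.reindex_bij_betw[OF O3_bij[OF k], of ff] by simp
  also have "\<dots> = (\<Sum>m\<in>{2..M div 2 - 2}. \<Sum>i\<in>Iset m. \<Sum>R\<in>Rs k m. ff (phi (m,i,R)))"
  proof -
    have e1: "(\<Sum>m\<in>{2..M div 2 - 2}. \<Sum>y\<in>Iset m \<times> Rs k m. ff (phi (m,y)))
        = (\<Sum>(m,y)\<in>Sigma {2..M div 2 - 2} (\<lambda>m. Iset m \<times> Rs k m). ff (phi (m,y)))"
      by (rule sum.Sigma) (auto simp: finite_Iset finite_Rs)
    have e2: "\<And>m. (\<Sum>y\<in>Iset m \<times> Rs k m. ff (phi (m,y))) = (\<Sum>i\<in>Iset m. \<Sum>R\<in>Rs k m. ff (phi (m,i,R)))"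
      by (subst sum.cartesian_product) (simp add: split_def)
    show ?thesis using e1 e2 unfolding W_def by (simp add: split_def)
  qed
  also have "\<dots> = (\<Sum>m\<in>{2..M div 2 - 2}. \<Sum>i\<in>Iset m. \<Sum>R\<in>Rs k m. Q i m * hprod h R)"
  proof (intro sum.cong refl)
    fix m i R assume m: "m \<in> {2..M div 2 - 2}" and i: "i \<in> Iset m" and R: "R \<in> Rs k m"
    have i': "i < 4" "clw i m \<subseteq> verts M" using i by (auto simp: Iset_def)
    note g = W_good[OF i' R k]
    show "ff (phi (m,i,R)) = Q i m * hprod h R"
      using hprod_union[OF g(2) g(1)] by (simp add: ff_def phi_def Q_def mult.assoc)
  qed
  also have "\<dots> = (\<Sum>m\<in>{2..M div 2 - 2}. \<Sum>R\<in>Rs k m. (\<Sum>i\<in>Iset m. Q i m) * hprod h R)"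
    by (simp add: sum.swap[of _ "Iset _"] sum_distrib_right)
  also have "\<dots> = 0"
  proof (rule sum.neutral, rule ballI)
    fix m assume m: "m \<in> {2..M div 2 - 2}"
    have "(\<Sum>i\<in>Iset m. Q i m) = 0" using sumQ extra[of m] m by simp
    then show "(\<Sum>R\<in>Rs k m. (\<Sum>i\<in>Iset m. Q i m) * hprod h R) = 0" by simp
  qed
  finally show ?thesis .
qed

end


context ffd2 begin

lemma charge1: "charge M h 1 = (\<Sum>v\<in>verts M. h v)"
proof -
  have e: "{S. indep M S \<and> card S = 1} = (\<lambda>v. {v}) ` verts M"
  proof
    show "{S. indep M S \<and> card S = 1} \<subseteq> (\<lambda>v. {v}) ` verts M"
    proof
      fix S assume "S \<in> {S. indep M S \<and> card S = 1}"
      then have i: "indep M S" and c: "card S = 1" by auto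
      then obtain v where v: "S = {v}" using card_1_singleton_iff by (metis One_nat_def)
      then have "v \<in> verts M" using i by (auto simp: indep_def)
      then show "S \<in> (\<lambda>v. {v}) ` verts M" using v by blast
    qed
    show "(\<lambda>v. {v}) ` verts M \<subseteq> {S. indep M S \<and> card S = 1}"
      by (auto simp: indep_def)
  qed
  have "charge M h 1 = (\<Sum>S\<in>(\<lambda>v. {v}) ` verts M. hprod h S)" unfolding charge_def e ..
  also have "\<dots> = (\<Sum>v\<in>verts M. hprod h {v})" by (subst sum.reindex) (auto simp: inj_on_def)
  also have "\<dots> = (\<Sum>v\<in>verts M. h v)" by (rule sum.cong) auto
  finally show ?thesis .
qed

lemma finite_O3: "finite (O3 k)"
proof -
  have "O3 k \<subseteq> verts M \<times> Pow (verts M)" by (auto simp: O3_def indep_def)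
  then show ?thesis using finite_verts by (auto intro: finite_subset)
qed

lemma main: "charge M h 1 * charge M h k - charge M h k * charge M h 1 = 0"
proof -
  define I where "I = {S. indep M S \<and> card S = k}"
  have fV: "finite (verts M)" by (rule finite_verts)
  have fI: "finite I"
  proof -
    have "I \<subseteq> Pow (verts M)" by (auto simp: I_def indep_def)
    then show ?thesis using fV by (auto intro: finite_subset)
  qed
  have ck: "charge M h k = (\<Sum>S\<in>I. hprod h S)" by (simp add: charge_def I_def)
  have "charge M h 1 * charge M h k - charge M h k * charge M h 1
      = (\<Sum>v\<in>verts M. \<Sum>S\<in>I. h v * hprod h S) - (\<Sum>S\<in>I. \<Sum>v\<in>verts M. hprod h S * h v)"
    unfolding charge1 ck by (simp add: sum_product)
  also have "(\<Sum>S\<in>I. \<Sum>v\<in>verts M. hprod h S * h v) = (\<Sum>v\<in>verts M. \<Sum>S\<in>I. hprod h S * h v)"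
    by (rule sum.swap)
  also have "(\<Sum>v\<in>verts M. \<Sum>S\<in>I. h v * hprod h S) - (\<Sum>v\<in>verts M. \<Sum>S\<in>I. hprod h S * h v)
      = (\<Sum>v\<in>verts M. \<Sum>S\<in>I. h v * hprod h S - hprod h S * h v)"
    by (simp add: sum_subtractf)
  also have "\<dots> = (\<Sum>v\<in>verts M. \<Sum>S\<in>I. if odd (card (S \<inter> Nb v)) then ff (v,S) + ff (v,S) else 0)"
  proof (intro sum.cong refl)
    fix v S assume v: "v \<in> verts M" and S: "S \<in> I"
    have iS: "indep M S" using S by (simp add: I_def)
    show "h v * hprod h S - hprod h S * h v = (if odd (card (S \<inter> Nb v)) then ff (v,S) + ff (v,S) else 0)"
      using sign[OF iS v] by (simp add: ff_def)
  qed
  also have "\<dots> = (\<Sum>p\<in>verts M \<times> I. if odd (card (snd p \<inter> Nb (fst p))) then ff p + ff p else 0)"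
    by (subst sum.cartesian_product) (rule sum.cong, simp, clarsimp)
  also have "\<dots> = (\<Sum>p\<in>{p\<in>verts M \<times> I. odd (card (snd p \<inter> Nb (fst p)))}. ff p + ff p)"
    by (rule sum.inter_filter[symmetric]) (use fV fI in simp)
  also have "{p\<in>verts M \<times> I. odd (card (snd p \<inter> Nb (fst p)))} = O1 k \<union> O3 k"
  proof
    show "{p\<in>verts M \<times> I. odd (card (snd p \<inter> Nb (fst p)))} \<subseteq> O1 k \<union> O3 k"
    proof
      fix p assume p: "p \<in> {p\<in>verts M \<times> I. odd (card (snd p \<inter> Nb (fst p)))}"
      then have iS: "indep M (snd p)" by (auto simp: I_def)
      have le: "card (snd p \<inter> Nb (fst p)) \<le> 3" by (rule cnt_le3[OF iS])
      have od: "odd (card (snd p \<inter> Nb (fst p)))" using p by simp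
      have "card (snd p \<inter> Nb (fst p)) = 1 \<or> card (snd p \<inter> Nb (fst p)) = 3" using le od by presburger
      then show "p \<in> O1 k \<union> O3 k" using p by (auto simp: O1_def O3_def I_def)
    qed
    show "O1 k \<union> O3 k \<subseteq> {p\<in>verts M \<times> I. odd (card (snd p \<inter> Nb (fst p)))}"
      by (auto simp: O1_def O3_def I_def)
  qed
  also have "(\<Sum>p\<in>O1 k \<union> O3 k. ff p + ff p) = (\<Sum>p\<in>O1 k. ff p + ff p) + (\<Sum>p\<in>O3 k. ff p + ff p)"
    by (rule sum.union_disjoint) (simp_all add: finite_O1 finite_O3, auto simp: O1_def O3_def)
  also have "\<dots> = 0" by (simp add: sum.distrib O1_zero O3_zero)
  finally show ?thesis .
qed

end


theorem theorem1:
  fixes M :: int and h :: "gen \<Rightarrow> 'a::ring_1" and sc :: "complex \<Rightarrow> 'a"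
    and b bb :: "int \<Rightarrow> complex"
  assumes M: "M \<ge> 1"
    and sc_one: "sc 1 = 1"
    and sc_add: "\<And>x y. sc (x + y) = sc x + sc y"
    and sc_mult: "\<And>x y. sc (x * y) = sc x * sc y"
    and sc_central: "\<And>c a. sc c * a = a * sc c"
    and sqH: "\<And>j. GH j \<in> verts M \<Longrightarrow> h (GH j) * h (GH j) = sc ((b j)^2)"
    and sqB: "\<And>j. GB j \<in> verts M \<Longrightarrow> h (GB j) * h (GB j) = sc ((bb j)^2)"
    and anti: "\<And>u v. u \<in> verts M \<Longrightarrow> v \<in> verts M \<Longrightarrow> adj u v \<Longrightarrow> h u * h v = - (h v * h u)"
    and comm: "\<And>u v. u \<in> verts M \<Longrightarrow> v \<in> verts M \<Longrightarrow> u \<noteq> v \<Longrightarrow> \<not> adj u v \<Longrightarrow> h u * h v = h v * h u"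
    and extra: "\<And>m. 2 \<le> m \<Longrightarrow> m \<le> M div 2 - 2 \<Longrightarrow>
                  Aop M h m * Cop M h (m + 1) = Cop M h m * Aop M h (m + 2)"
  shows "\<forall>k. charge M h 1 * charge M h k - charge M h k * charge M h 1 = 0"
proof -
  have "ffd2 M h" unfolding ffd2_def ffd_def ffd2_axioms_def using anti comm extra by blast
  then interpret ffd2 M h .
  show ?thesis using main by blast
qed

end
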